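(* Let $k,n$ be positive integers with $k\leqslant n$ and let $C\in\mathrm{Conf}([n]^k_<)$ be a shelling order. Then its promotion $\partial_D C$ is a shelling order.
   Context: $[n]:=\{1,\ldots,n\}$; $[n]^k_<$ denotes the set of $k$-element subsets of $[n]$. $\mathrm{Conf}([n]^k_<)$ is the set of tuples $C=(C_1,\ldots,C_h)$, $h\geqslant1$, of pairwise distinct elements of $[n]^k_<$. $C$ is a shelling order if for all $i<j$ in $[h]$ there exists $z<j$ with $|C_z\cap C_j|=k-1$ and $C_i\cap C_j\subseteq C_z\cap C_j$. The dual graph $D(C)$ is the graph on vertex set $[h]$ with $\{i,j\}$ an edge iff $|C_i\cap C_j|=k-1$. For a graph $G$ on vertex set $[h]$, its track $T_G=\{v_1,\ldots,v_r\}$ is defined by $v_1=1$ and, for $i\geqslant 2$, $v_i=\min\{j\in[h]: j>v_{i-1},\ \{v_{i-1},j\}\text{ an edge}\}$ if this minimum exists, otherwise $r=i-1$. The promotion of $G$ is the permutation $\partial_G\in S_h$ with $\partial_G(i)=i-1$ for $i\notin T_G$, $\partial_G(v_j)=v_{j+1}-1$ for $j\in[r-1]$, and $\partial_G(v_r)=h$. For $\sigma\in S_h$ set $\sigma C:=(C_{\sigma^{-1}(1)},\ldots,C_{\sigma^{-1}(h)})$. The promotion of $C$ is $\partial_D C:=\partial_{D(C)}C$. *)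

theory Defs
  imports Main
begin

(* A configuration C = (C_1,...,C_h) is a list; C_i (1-based) is nth1 C i. *)
definition nth1 :: "'a list \<Rightarrow> nat \<Rightarrow> 'a" where
  "nth1 C i = C ! (i - 1)"

definition conf :: "nat \<Rightarrow> nat \<Rightarrow> nat set list \<Rightarrow> bool" where
  "conf n k C \<longleftrightarrow> C \<noteq> [] \<and> distinct C \<and>
     (\<forall>A \<in> set C. A \<subseteq> {1..n} \<and> card A = k)"

definition shelling_order :: "nat \<Rightarrow> nat set list \<Rightarrow> bool" where
  "shelling_order k C \<longleftrightarrow>
     (\<forall>i j. 1 \<le> i \<and> i < j \<and> j \<le> length C \<longrightarrow>
        (\<exists>z. 1 \<le> z \<and> z < j \<and> card (nth1 C z \<inter> nth1 C j) = k - 1 \<and>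
             nth1 C i \<inter> nth1 C j \<subseteq> nth1 C z \<inter> nth1 C j))"

definition dual_graph :: "nat \<Rightarrow> nat set list \<Rightarrow> nat \<Rightarrow> nat \<Rightarrow> bool" where
  "dual_graph k C i j \<longleftrightarrow> i \<in> {1..length C} \<and> j \<in> {1..length C} \<and>
     card (nth1 C i \<inter> nth1 C j) = k - 1"

(* a graph on [h] is given by h and a (symmetric) edge relation E *)
definition track_next :: "(nat \<Rightarrow> nat \<Rightarrow> bool) \<Rightarrow> nat \<Rightarrow> nat \<Rightarrow> nat option" where
  "track_next E h v = (if \<exists>j. j \<in> {1..h} \<and> v < j \<and> E v j
      then Some (LEAST j. j \<in> {1..h} \<and> v < j \<and> E v j) else None)"

lemma track_next_gt: "track_next E h v = Some w \<Longrightarrow> v < w \<and> w \<le> h"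
proof -
  assume a: "track_next E h v = Some w"
  let ?P = "\<lambda>j. j \<in> {1..h} \<and> v < j \<and> E v j"
  have ex: "\<exists>j. ?P j"
  proof (rule ccontr)
    assume "\<not> (\<exists>j. ?P j)"
    then have "track_next E h v = None" unfolding track_next_def by (simp only: if_False)
    with a show False by simp
  qed
  then have "track_next E h v = Some (Least ?P)" unfolding track_next_def by (simp only: if_True)
  with a have w: "w = Least ?P" by simp
  from ex have "?P (Least ?P)" by (rule LeastI_ex)
  then show ?thesis unfolding w by simp
qed

function track_from :: "(nat \<Rightarrow> nat \<Rightarrow> bool) \<Rightarrow> nat \<Rightarrow> nat \<Rightarrow> nat list" where
  "track_from E h v = v # (case track_next E h v of None \<Rightarrow> [] | Some w \<Rightarrow> track_from E h w)"
  by pat_completeness auto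
termination
  by (relation "measure (\<lambda>(E, h, v). h - v)")
     (auto dest!: track_next_gt)

definition track :: "(nat \<Rightarrow> nat \<Rightarrow> bool) \<Rightarrow> nat \<Rightarrow> nat list" where
  "track E h = track_from E h 1"

definition promotion_perm :: "(nat \<Rightarrow> nat \<Rightarrow> bool) \<Rightarrow> nat \<Rightarrow> nat \<Rightarrow> nat" where
  "promotion_perm E h i =
     (let T = track E h in
      if i \<notin> set T then i - 1
      else if i = last T then h
      else T ! (Suc (LEAST p. p < length T \<and> T ! p = i)) - 1)"

definition perm_act :: "(nat \<Rightarrow> nat) \<Rightarrow> 'a list \<Rightarrow> 'a list" where
  "perm_act \<sigma> C = map (\<lambda>m. nth1 C (inv_into {1..length C} \<sigma> m)) [1..<Suc (length C)]"

definition promotion :: "nat \<Rightarrow> nat set list \<Rightarrow> nat set list" where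
  "promotion k C = perm_act (promotion_perm (dual_graph k C) (length C)) C"

end

theory Submission
  imports Defs
begin

declare track_from.simps[simp del]

lemma tn_Some:
  assumes "track_next E h v = Some w"
  shows "w \<in> {1..h} \<and> v < w \<and> E v w \<and> (\<forall>t. t \<in> {1..h} \<and> v < t \<and> E v t \<longrightarrow> w \<le> t)"
proof -
  let ?P = "\<lambda>j. j \<in> {1..h} \<and> v < j \<and> E v j"
  have ex: "\<exists>j. ?P j"
  proof (rule ccontr)
    assume "\<not> (\<exists>j. ?P j)"
    then have "track_next E h v = None" unfolding track_next_def by (simp only: if_False)
    with assms show False by simp
  qed
  then have "track_next E h v = Some (Least ?P)" unfolding track_next_def by (simp only: if_True)
  with assms have w: "w = Least ?P" by simp
  from ex have "?P (Least ?P)" by (rule LeastI_ex)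
  moreover have "\<forall>t. ?P t \<longrightarrow> Least ?P \<le> t" by (auto intro: Least_le)
  ultimately show ?thesis unfolding w by blast
qed

lemma tn_None:
  assumes "track_next E h v = None" shows "\<not> (\<exists>j. j \<in> {1..h} \<and> v < j \<and> E v j)"
  using assms unfolding track_next_def by (auto split: if_splits)

lemma tf_None: "track_next E h v = None \<Longrightarrow> track_from E h v = [v]"
  by (subst track_from.simps) simp

lemma tf_Some: "track_next E h v = Some w \<Longrightarrow> track_from E h v = v # track_from E h w"
  by (subst track_from.simps) simp

lemma tf_hd: "v \<in> set (track_from E h v)"
  by (subst track_from.simps) simp

lemma tf_ge: "x \<in> set (track_from E h v) \<Longrightarrow> v \<le> x"
proof (induction E h v rule: track_from.induct)
  case (1 E h v)
  show ?case
  proof (cases "track_next E h v")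
    case None with 1 show ?thesis by (simp add: tf_None)
  next
    case (Some w)
    with "1.prems" have "x = v \<or> x \<in> set (track_from E h w)" by (simp add: tf_Some)
    then show ?thesis using "1.IH"[OF Some] track_next_gt[OF Some] by force
  qed
qed

lemma tf_closed: "x \<in> set (track_from E h v) \<Longrightarrow> track_next E h x = Some w \<Longrightarrow> w \<in> set (track_from E h v)"
proof (induction E h v rule: track_from.induct)
  case (1 E h v)
  show ?case
  proof (cases "track_next E h v")
    case None with 1 show ?thesis by (simp add: tf_None)
  next
    case (Some u)
    with "1.prems" have "x = v \<or> x \<in> set (track_from E h u)" by (simp add: tf_Some)
    then show ?thesis using "1.IH"[OF Some] Some "1.prems"(2) tf_hd[of u E h] by (auto simp: tf_Some)
  qed
qed

lemma tf_T3: "x \<in> set (track_from E h v) \<Longrightarrow> y \<in> set (track_from E h v) \<Longrightarrow> x < y \<Longrightarrow>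
   \<exists>w. track_next E h x = Some w \<and> w \<le> y"
proof (induction E h v rule: track_from.induct)
  case (1 E h v)
  show ?case
  proof (cases "track_next E h v")
    case None with 1 show ?thesis by (simp add: tf_None)
  next
    case (Some u)
    have vu: "v < u" using track_next_gt[OF Some] by simp
    from "1.prems" Some have x: "x = v \<or> x \<in> set (track_from E h u)"
      and y: "y = v \<or> y \<in> set (track_from E h u)" by (simp_all add: tf_Some)
    show ?thesis
    proof (cases "x = v")
      case True
      with y "1.prems"(3) have "y \<in> set (track_from E h u)" by auto
      then have "u \<le> y" by (rule tf_ge)
      with True Some show ?thesis by blast
    next
      case False
      with x have xs: "x \<in> set (track_from E h u)" by simp
      then have "u \<le> x" by (rule tf_ge)
      with "1.prems"(3) vu y have ys: "y \<in> set (track_from E h u)" by auto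
      show ?thesis using "1.IH"[OF Some xs ys "1.prems"(3)] .
    qed
  qed
qed

lemma tf_sorted: "sorted_wrt (<) (track_from E h v)"
proof (induction E h v rule: track_from.induct)
  case (1 E h v)
  show ?case
  proof (cases "track_next E h v")
    case None with 1 show ?thesis by (simp add: tf_None)
  next
    case (Some u)
    have vu: "v < u" using track_next_gt[OF Some] by simp
    have "\<forall>x\<in>set (track_from E h u). v < x" using tf_ge[of _ E h u] vu by fastforce
    then show ?thesis using "1.IH"[OF Some] Some by (simp add: tf_Some)
  qed
qed

lemma tf_last: "track_next E h (last (track_from E h v)) = None"
proof (induction E h v rule: track_from.induct)
  case (1 E h v)
  show ?case
  proof (cases "track_next E h v")
    case None with 1 show ?thesis by (simp add: tf_None)
  next
    case (Some u)
    have "track_from E h u \<noteq> []" using tf_hd[of u E h] by auto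
    then show ?thesis using "1.IH"[OF Some] Some by (simp add: tf_Some)
  qed
qed

lemma tf_idx: "x \<in> set (track_from E h v) \<Longrightarrow> track_next E h x = Some w \<Longrightarrow>
   \<exists>p. Suc p < length (track_from E h v) \<and> track_from E h v ! p = x \<and> track_from E h v ! Suc p = w"
proof (induction E h v rule: track_from.induct)
  case (1 E h v)
  show ?case
  proof (cases "track_next E h v")
    case None with 1 show ?thesis by (simp add: tf_None)
  next
    case (Some u)
    from "1.prems" Some have x: "x = v \<or> x \<in> set (track_from E h u)" by (simp add: tf_Some)
    show ?thesis
    proof (cases "x = v")
      case True
      have ne: "track_from E h u \<noteq> []" using tf_hd[of u E h] by auto
      have "track_from E h u ! 0 = u" by (subst track_from.simps) simp
      then show ?thesis using True Some "1.prems"(2) ne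
        by (intro exI[of _ 0]) (simp add: tf_Some)
    next
      case False
      with x have xs: "x \<in> set (track_from E h u)" by simp
      from "1.IH"[OF Some xs "1.prems"(2)] obtain p where
        "Suc p < length (track_from E h u)" "track_from E h u ! p = x" "track_from E h u ! Suc p = w"
        by blast
      then show ?thesis using Some by (intro exI[of _ "Suc p"]) (simp add: tf_Some)
    qed
  qed
qed

lemma tf_le_last: "x \<in> set (track_from E h v) \<Longrightarrow> x \<le> last (track_from E h v)"
proof (induction E h v rule: track_from.induct)
  case (1 E h v)
  show ?case
  proof (cases "track_next E h v")
    case None with 1 show ?thesis by (simp add: tf_None)
  next
    case (Some u)
    have ne: "track_from E h u \<noteq> []" using tf_hd[of u E h] by auto
    have vu: "v < u" using track_next_gt[OF Some] by simp
    have "u \<le> last (track_from E h u)" using tf_ge[OF last_in_set[OF ne]] .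
    then show ?thesis using "1.IH"[OF Some] Some "1.prems" ne vu by (auto simp: tf_Some)
  qed
qed

lemma perm_T:
  assumes "i \<in> set (track E h)"
  shows "promotion_perm E h i = (case track_next E h i of None \<Rightarrow> h | Some w \<Rightarrow> w - 1)"
proof -
  let ?T = "track E h"
  have st: "sorted_wrt (<) ?T" unfolding track_def by (rule tf_sorted)
  then have dist: "distinct ?T" by (simp add: strict_sorted_iff)
  show ?thesis
  proof (cases "track_next E h i")
    case None
    have "i = last ?T"
    proof (rule ccontr)
      assume ne: "i \<noteq> last ?T"
      have "?T \<noteq> []" using assms by auto
      then have lin: "last ?T \<in> set ?T" by simp
      have "i \<le> last ?T" using tf_le_last[OF assms[unfolded track_def]] unfolding track_def .
      with ne have "i < last ?T" by simp
      from tf_T3[OF assms[unfolded track_def] lin[unfolded track_def]] this None show False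
        unfolding track_def by auto
    qed
    then show ?thesis using assms None unfolding promotion_perm_def Let_def by simp
  next
    case (Some w)
    have nl: "i \<noteq> last ?T" using tf_last[of E h 1] Some unfolding track_def by auto
    from tf_idx[OF assms[unfolded track_def] Some] obtain p where
      p: "Suc p < length ?T" "?T ! p = i" "?T ! Suc p = w" unfolding track_def by blast
    have "(LEAST q. q < length ?T \<and> ?T ! q = i) = p"
    proof (rule Least_equality)
      show "p < length ?T \<and> ?T ! p = i" using p by simp
      show "\<And>y. y < length ?T \<and> ?T ! y = i \<Longrightarrow> p \<le> y"
        using p dist nth_eq_iff_index_eq by (metis Suc_lessD order_refl)
    qed
    then show ?thesis using assms nl Some p unfolding promotion_perm_def Let_def by simp
  qed
qed


lemma lemL:
  assumes sh: "shelling_order k C"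
  shows "i \<le> length C \<Longrightarrow> 1 \<le> j \<Longrightarrow> j < i \<Longrightarrow>
    (\<forall>t. j < t \<and> t \<le> i \<longrightarrow> card (nth1 C j \<inter> nth1 C t) \<noteq> k - 1) \<Longrightarrow>
    \<exists>z. 1 \<le> z \<and> z < j \<and> card (nth1 C z \<inter> nth1 C j) = k - 1 \<and>
        nth1 C i \<inter> nth1 C j \<subseteq> nth1 C z \<inter> nth1 C j"
proof (induction i rule: less_induct)
  case (less i)
  from sh less.prems obtain z where z: "1 \<le> z" "z < i" "card (nth1 C z \<inter> nth1 C i) = k - 1"
    "nth1 C j \<inter> nth1 C i \<subseteq> nth1 C z \<inter> nth1 C i"
    unfolding shelling_order_def by (meson order_trans order_less_imp_le)
  have "z \<noteq> j" using z(3) less.prems(4) less.prems(3) by auto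
  then consider "z < j" | "j < z" by linarith
  then show ?case
  proof cases
    case 1
    from sh obtain z' where z': "1 \<le> z'" "z' < j" "card (nth1 C z' \<inter> nth1 C j) = k - 1"
      "nth1 C z \<inter> nth1 C j \<subseteq> nth1 C z' \<inter> nth1 C j"
      unfolding shelling_order_def using 1 z(1) less.prems by (meson order_less_imp_le order_less_le_trans)
    show ?thesis using z' z(4) by (intro exI[of _ z']) blast
  next
    case 2
    from less.IH[OF z(2)] obtain z' where z': "1 \<le> z'" "z' < j" "card (nth1 C z' \<inter> nth1 C j) = k - 1"
      "nth1 C z \<inter> nth1 C j \<subseteq> nth1 C z' \<inter> nth1 C j"
      using less.prems z 2 by auto
    show ?thesis using z' z(4) by (intro exI[of _ z']) blast
  qed
qed

lemma set_nth1: "set C = nth1 C ` {1..length C}"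
proof
  show "set C \<subseteq> nth1 C ` {1..length C}"
  proof
    fix x assume "x \<in> set C"
    then obtain p where "p < length C" "C ! p = x" by (auto simp: in_set_conv_nth)
    then show "x \<in> nth1 C ` {1..length C}" unfolding nth1_def
      by (intro image_eqI[of _ _ "Suc p"]) auto
  qed
  show "nth1 C ` {1..length C} \<subseteq> set C" unfolding nth1_def by auto
qed

lemma perm_act_nth1:
  assumes "b \<in> {1..length C}"
  shows "nth1 (perm_act \<sigma> C) b = nth1 C (inv_into {1..length C} \<sigma> b)"
proof -
  have l: "b - 1 < length [1..<Suc (length C)]" using assms by (auto simp del: upt_Suc)
  have "[1..<Suc (length C)] ! (b - 1) = b" using assms by (simp del: upt_Suc add: nth_upt)
  then show ?thesis using nth_map[OF l] by (simp del: upt_Suc add: perm_act_def nth1_def[of "map _ _"])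
qed

lemma perm_act_length: "length (perm_act \<sigma> C) = length C"
  unfolding perm_act_def by (simp del: upt_Suc)

theorem theorem5p4:
  fixes n k :: nat and C :: "nat set list"
  assumes "0 < k" and "k \<le> n"
    and "conf n k C" and "shelling_order k C"
  shows "conf n k (promotion k C) \<and> shelling_order k (promotion k C)"
proof -
  define h where "h = length C"
  define E where "E = dual_graph k C"
  define T where "T = track E h"
  define \<sigma> where "\<sigma> = promotion_perm E h"
  define nx where "nx = track_next E h"
  define A where "A = (\<lambda>i j. card (nth1 C i \<inter> nth1 C j) = k - 1)"
  define D where "D = promotion k C"
  have D: "D = perm_act \<sigma> C" unfolding D_def promotion_def \<sigma>_def E_def h_def ..
  have sh: "shelling_order k C" by fact
  have hpos: "1 \<le> h" using assms(3) unfolding conf_def h_def by (cases C) auto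
  have Asym: "A i j = A j i" for i j unfolding A_def by (simp add: Int_commute)
  have EA: "i \<in> {1..h} \<Longrightarrow> j \<in> {1..h} \<Longrightarrow> E i j = A i j" for i j
    unfolding E_def A_def dual_graph_def h_def by simp
  have T1: "1 \<in> set T" unfolding T_def track_def by (rule tf_hd)
  have Tcl: "v \<in> set T \<Longrightarrow> nx v = Some w \<Longrightarrow> w \<in> set T" for v w
    unfolding T_def track_def nx_def by (rule tf_closed)
  have T3: "x \<in> set T \<Longrightarrow> y \<in> set T \<Longrightarrow> x < y \<Longrightarrow> \<exists>w. nx x = Some w \<and> w \<le> y" for x y
    unfolding T_def track_def nx_def by (rule tf_T3)
  have sT: "i \<in> set T \<Longrightarrow> \<sigma> i = (case nx i of None \<Rightarrow> h | Some w \<Rightarrow> w - 1)" for i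
    unfolding T_def \<sigma>_def nx_def by (rule perm_T)
  have snT: "i \<notin> set T \<Longrightarrow> \<sigma> i = i - 1" for i
    unfolding T_def \<sigma>_def promotion_perm_def Let_def by simp
  have nxS: "nx v = Some w \<Longrightarrow> w \<in> {1..h} \<and> v < w \<and> E v w \<and> (\<forall>t. t \<in> {1..h} \<and> v < t \<and> E v t \<longrightarrow> w \<le> t)" for v w
    unfolding nx_def by (rule tn_Some)
  have nxN: "nx v = None \<Longrightarrow> \<not> (\<exists>j. j \<in> {1..h} \<and> v < j \<and> E v j)" for v
    unfolding nx_def by (rule tn_None)
  have sT_ge: "i \<in> set T \<Longrightarrow> i \<le> h \<Longrightarrow> i \<le> \<sigma> i" for i
  proof -
    assume "i \<in> set T" "i \<le> h"
    then show "i \<le> \<sigma> i" using sT[of i] nxS[of i] by (cases "nx i") auto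
  qed
  have range: "i \<in> {1..h} \<Longrightarrow> \<sigma> i \<in> {1..h}" for i
  proof -
    assume i: "i \<in> {1..h}"
    show "\<sigma> i \<in> {1..h}"
    proof (cases "i \<in> set T")
      case True
      then show ?thesis using sT[of i] nxS[of i] hpos i by (cases "nx i") auto
    next
      case False
      with T1 have "i \<noteq> 1" by auto
      then show ?thesis using snT[OF False] i by auto
    qed
  qed
  have inj: "inj_on \<sigma> {1..h}"
  proof (rule inj_onI)
    fix i i' assume i: "i \<in> {1..h}" and i': "i' \<in> {1..h}" and eq: "\<sigma> i = \<sigma> i'"
    have key: "\<lbrakk>x \<in> {1..h}; y \<in> {1..h}; \<sigma> x = \<sigma> y; x \<in> set T; y \<notin> set T\<rbrakk> \<Longrightarrow> False" for x y
    proof -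
      assume x: "x \<in> {1..h}" and y: "y \<in> {1..h}" and e: "\<sigma> x = \<sigma> y" and xT: "x \<in> set T" and yT: "y \<notin> set T"
      have y1: "y \<noteq> 1" using T1 yT by auto
      show False
      proof (cases "nx x")
        case None
        then show False using e sT[OF xT] snT[OF yT] y by auto
      next
        case (Some w)
        then have "w - 1 = y - 1" using e sT[OF xT] snT[OF yT] by auto
        moreover have "w \<ge> 1" using nxS[OF Some] by auto
        ultimately have "w = y" using y1 y by auto
        then show False using Tcl[OF xT Some] yT by simp
      qed
    qed
    have lt: "\<lbrakk>x \<in> {1..h}; y \<in> {1..h}; x \<in> set T; y \<in> set T; x < y\<rbrakk> \<Longrightarrow> \<sigma> x < \<sigma> y" for x y
    proof -
      assume x: "x \<in> {1..h}" and y: "y \<in> {1..h}" and xT: "x \<in> set T" and yT: "y \<in> set T" and xy: "x < y"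
      from T3[OF xT yT xy] obtain w where w: "nx x = Some w" "w \<le> y" by blast
      have "\<sigma> x = w - 1" using sT[OF xT] w by simp
      moreover have "w \<ge> 1" using nxS[OF w(1)] by auto
      moreover have "y \<le> \<sigma> y" using sT_ge yT y by auto
      ultimately show ?thesis using w by linarith
    qed
    show "i = i'"
    proof (cases "i \<in> set T"; cases "i' \<in> set T")
      assume "i \<in> set T" "i' \<in> set T"
      then show ?thesis using lt[of i i'] lt[of i' i] i i' eq by (metis less_irrefl linorder_neqE_nat)
    next
      assume "i \<in> set T" "i' \<notin> set T" then show ?thesis using key[OF i i' eq] by blast
    next
      assume "i \<notin> set T" "i' \<in> set T" then show ?thesis using key[OF i' i eq[symmetric]] by blast
    next
      assume "i \<notin> set T" "i' \<notin> set T"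
      moreover have "i \<noteq> 1" "i' \<noteq> 1" using T1 calculation by auto
      ultimately show ?thesis using snT eq i i' by auto
    qed
  qed
  have img: "\<sigma> ` {1..h} = {1..h}"
    by (rule endo_inj_surj) (use range inj in auto)
  have bij: "bij_betw \<sigma> {1..h} {1..h}" using inj img by (simp add: bij_betw_def)
  define \<tau> where "\<tau> = inv_into {1..h} \<sigma>"
  have \<tau>bij: "bij_betw \<tau> {1..h} {1..h}" unfolding \<tau>_def by (rule bij_betw_inv_into[OF bij])
  have \<sigma>\<tau>: "b \<in> {1..h} \<Longrightarrow> \<sigma> (\<tau> b) = b" for b unfolding \<tau>_def using img f_inv_into_f by metis
  have \<tau>\<sigma>: "i \<in> {1..h} \<Longrightarrow> \<tau> (\<sigma> i) = i" for i unfolding \<tau>_def using inv_into_f_f[OF inj] by blast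
  have \<tau>r: "b \<in> {1..h} \<Longrightarrow> \<tau> b \<in> {1..h}" for b using \<tau>bij bij_betwE by blast
  have lenD: "length D = h" unfolding D h_def by (rule perm_act_length)
  have nthD: "b \<in> {1..h} \<Longrightarrow> nth1 D b = nth1 C (\<tau> b)" for b
    unfolding D \<tau>_def h_def by (rule perm_act_nth1) (simp add: h_def)
  have setD: "set D = set C"
  proof -
    have "set D = nth1 D ` {1..h}" using set_nth1[of D] lenD by simp
    also have "\<dots> = nth1 C ` \<tau> ` {1..h}" using nthD by (auto simp: image_iff)
    also have "\<tau> ` {1..h} = {1..h}" using \<tau>bij by (simp add: bij_betw_def)
    finally show ?thesis using set_nth1[of C] h_def by simp
  qed
  have confD: "conf n k D"
  proof -
    have "distinct C" using assms(3) unfolding conf_def by simp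
    then have "card (set D) = length D" using setD lenD h_def distinct_card by metis
    then have "distinct D" by (rule card_distinct)
    then show ?thesis using assms(3) setD lenD hpos unfolding conf_def by auto
  qed
  have shC: "1 \<le> i \<Longrightarrow> i < j \<Longrightarrow> j \<le> h \<Longrightarrow> \<exists>z. 1 \<le> z \<and> z < j \<and> A z j \<and>
       nth1 C i \<inter> nth1 C j \<subseteq> nth1 C z \<inter> nth1 C j" for i j
    using sh unfolding shelling_order_def A_def h_def by blast
  have core: "i \<in> {1..h} \<Longrightarrow> j \<in> {1..h} \<Longrightarrow> \<sigma> i < \<sigma> j \<Longrightarrow>
     \<exists>z\<in>{1..h}. \<sigma> z < \<sigma> j \<and> A z j \<and> nth1 C i \<inter> nth1 C j \<subseteq> nth1 C z \<inter> nth1 C j" for i j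
  proof -
    assume i: "i \<in> {1..h}" and j: "j \<in> {1..h}" and lt: "\<sigma> i < \<sigma> j"
    show ?thesis
    proof (cases "j \<in> set T")
      case False
      have sj: "\<sigma> j = j - 1" by (rule snT[OF False])
      have ij: "i < j"
      proof (cases "i \<in> set T")
        case True then show ?thesis using sT_ge[OF True] i lt sj by auto
      next
        case False then show ?thesis using snT[OF False] lt sj by auto
      qed
      from shC[OF _ ij] i j obtain z where z: "1 \<le> z" "z < j" "A z j"
        "nth1 C i \<inter> nth1 C j \<subseteq> nth1 C z \<inter> nth1 C j" by auto
      have "\<sigma> z < \<sigma> j"
      proof (cases "z \<in> set T")
        case zT: True
        have Ezj: "E z j" using EA[of z j] z j by auto
        then obtain w where w: "nx z = Some w" using nxN[of z] z j by (cases "nx z") auto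
        have "w \<le> j" using nxS[OF w] Ezj z j by auto
        moreover have "w \<noteq> j" using Tcl[OF zT w] False by auto
        moreover have "\<sigma> z = w - 1" using sT[OF zT] w by simp
        moreover have "z < w" using nxS[OF w] by simp
        ultimately show ?thesis using sj z by linarith
      next
        case zT: False then show ?thesis using snT[OF zT] sj z by auto
      qed
      then show ?thesis using z j by auto
    next
      case jT: True
      have sjge: "j \<le> \<sigma> j" using sT_ge jT j by auto
      have below: "1 \<le> z \<Longrightarrow> z < j \<Longrightarrow> \<sigma> z < \<sigma> j" for z
      proof (cases "z \<in> set T")
        case zT: True
        assume "1 \<le> z" "z < j"
        from T3[OF zT jT \<open>z < j\<close>] obtain w where w: "nx z = Some w" "w \<le> j" by blast
        have "\<sigma> z = w - 1" using sT[OF zT] w by simp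
        moreover have "z < w" using nxS[OF w(1)] by simp
        ultimately show ?thesis using w sjge by linarith
      next
        case zT: False
        assume "1 \<le> z" "z < j"
        then show ?thesis using snT[OF zT] sjge by auto
      qed
      consider "i < j" | "i = j" | "j < i" by linarith
      then show ?thesis
      proof cases
        case 1
        from shC[OF _ 1] i j obtain z where z: "1 \<le> z" "z < j" "A z j"
          "nth1 C i \<inter> nth1 C j \<subseteq> nth1 C z \<inter> nth1 C j" by auto
        then show ?thesis using below[OF z(1,2)] j by auto
      next
        case 2 then show ?thesis using lt by simp
      next
        case 3
        have noadj: "\<forall>t. j < t \<and> t \<le> i \<longrightarrow> \<not> A j t"
        proof (intro allI impI)
          fix t assume t: "j < t \<and> t \<le> i"
          then have tr: "t \<in> {1..h}" using i j by auto
          show "\<not> A j t"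
          proof (cases "nx j")
            case None
            then show ?thesis using nxN[of j] EA[OF j tr] t tr by auto
          next
            case (Some w)
            have sj: "\<sigma> j = w - 1" using sT[OF jT] Some by simp
            have "i < w"
            proof (cases "i \<in> set T")
              case True then show ?thesis using sT_ge[OF True] i lt sj by auto
            next
              case False then show ?thesis using snT[OF False] lt sj by auto
            qed
            show ?thesis
            proof
              assume "A j t"
              then have "E j t" using EA[OF j tr] by simp
              then have "w \<le> t" using nxS[OF Some] t tr by blast
              then show False using \<open>i < w\<close> t by simp
            qed
          qed
        qed
        from lemL[OF sh, of i j] noadj i j 3 obtain z where z: "1 \<le> z" "z < j"
          "card (nth1 C z \<inter> nth1 C j) = k - 1" "nth1 C i \<inter> nth1 C j \<subseteq> nth1 C z \<inter> nth1 C j"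
          unfolding A_def h_def by auto
        then show ?thesis using below[OF z(1,2)] j unfolding A_def by auto
      qed
    qed
  qed
  have shD: "shelling_order k D"
    unfolding shelling_order_def
  proof (intro allI impI)
    fix a b assume ab: "1 \<le> a \<and> a < b \<and> b \<le> length D"
    then have a: "a \<in> {1..h}" and b: "b \<in> {1..h}" using lenD by auto
    have "\<sigma> (\<tau> a) < \<sigma> (\<tau> b)" using \<sigma>\<tau>[OF a] \<sigma>\<tau>[OF b] ab by simp
    from core[OF \<tau>r[OF a] \<tau>r[OF b] this] obtain z where z: "z \<in> {1..h}" "\<sigma> z < \<sigma> (\<tau> b)"
      "A z (\<tau> b)" "nth1 C (\<tau> a) \<inter> nth1 C (\<tau> b) \<subseteq> nth1 C z \<inter> nth1 C (\<tau> b)" by blast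
    have c: "\<sigma> z \<in> {1..h}" using range z(1) by blast
    show "\<exists>c. 1 \<le> c \<and> c < b \<and> card (nth1 D c \<inter> nth1 D b) = k - 1 \<and>
             nth1 D a \<inter> nth1 D b \<subseteq> nth1 D c \<inter> nth1 D b"
      using z c \<sigma>\<tau>[OF b] nthD[OF a] nthD[OF b] nthD[OF c] \<tau>\<sigma>[OF z(1)]
      by (intro exI[of _ "\<sigma> z"]) (auto simp: A_def)
  qed
  show ?thesis using confD shD unfolding D_def by simp
qed

end
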